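(* Let $(X,G)$ be a minimal system with finite minimal rank $mr$. Then $cr=\#\pi_{max}^{-1}(x)$ for every fiber distal point $x\in X_{max}$. Moreover, $X_{max}^{distal}=\{x\in X_{max}:\#\pi_{max}^{-1}(x)=cr\}$, and $cr=mr$ whenever $X_{max}$ contains a fiber distal point.
   Context: Let $X$ be a compact metric space with metric $d$ and $G$ a locally compact abelian group acting continuously and minimally on $X$, written $t\cdot x$. Points $x,y$ are proximal if $\inf_{t\in G}d(t\cdot x,t\cdot y)=0$. Let $\pi_{max}:X\to X_{max}$ be the maximal equicontinuous factor. For $x\in X_{max}$, $\delta>0$, $cr(x,\delta)$ is the maximal cardinality $l$ of a set $\{x_1,\dots,x_l\}\subset\pi_{max}^{-1}(x)$ with $\inf_{t\in G}d(t\cdot x_i,t\cdot x_j)\ge\delta$ for $i\neq j$; the coincidence rank is $cr=\lim_{\delta\to0^+}cr(x,\delta)$ (independent of $x$). The minimal rank is $mr=\inf\{\#\pi_{max}^{-1}(x):x\in X_{max}\}$. A point $x\in X$ is distal if it is not proximal to any $y\neq x$; a point $x\in X_{max}$ is fiber distal if every point of $\pi_{max}^{-1}(x)$ is distal; $X_{max}^{distal}$ denotes the set of fiber distal points. *)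

theory Defs
  imports "HOL-Analysis.Analysis" "HOL-Library.Extended_Real"
begin

definition is_action_on :: "('g::ab_group_add \<Rightarrow> 'a \<Rightarrow> 'a) \<Rightarrow> 'a set \<Rightarrow> bool" where
  "is_action_on act S \<longleftrightarrow>
     (\<forall>t. \<forall>x\<in>S. act t x \<in> S) \<and>
     (\<forall>x\<in>S. act 0 x = x) \<and>
     (\<forall>s t. \<forall>x\<in>S. act (s + t) x = act s (act t x))"

definition continuous_action_on ::
    "('g::topological_space \<Rightarrow> 'a::topological_space \<Rightarrow> 'a) \<Rightarrow> 'a set \<Rightarrow> bool" where
  "continuous_action_on act S \<longleftrightarrow> continuous_on (UNIV \<times> S) (\<lambda>p. act (fst p) (snd p))"

definition equicontinuous_on :: "('g \<Rightarrow> 'a::metric_space \<Rightarrow> 'a) \<Rightarrow> 'a set \<Rightarrow> bool" where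
  "equicontinuous_on act S \<longleftrightarrow>
     (\<forall>e>0. \<exists>d>0. \<forall>t. \<forall>x\<in>S. \<forall>y\<in>S. dist x y < d \<longrightarrow> dist (act t x) (act t y) < e)"

definition minimal_action :: "('g \<Rightarrow> 'a::topological_space \<Rightarrow> 'a) \<Rightarrow> bool" where
  "minimal_action act \<longleftrightarrow> (\<forall>x. closure (range (\<lambda>t. act t x)) = UNIV)"

text \<open>Since every compact metric space embeds into the Hilbert cube,
  factors Z are represented as compact subsets of the countable product nat => real
  (product topology, metrizable).\<close>
definition max_equicontinuous_factor ::
    "('g::{topological_ab_group_add} \<Rightarrow> 'x::metric_space \<Rightarrow> 'x)
     \<Rightarrow> ('g \<Rightarrow> 'y::metric_space \<Rightarrow> 'y) \<Rightarrow> ('x \<Rightarrow> 'y) \<Rightarrow> bool" where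
  "max_equicontinuous_factor actX actY \<pi> \<longleftrightarrow>
     compact (UNIV :: 'y set) \<and>
     is_action_on actY UNIV \<and> continuous_action_on actY UNIV \<and>
     equicontinuous_on actY UNIV \<and>
     continuous_on UNIV \<pi> \<and> surj \<pi> \<and> (\<forall>t x. \<pi> (actX t x) = actY t (\<pi> x)) \<and>
     (\<forall>(Z :: (nat \<Rightarrow> real) set) actZ p.
        (compact Z \<and> Z \<noteq> {} \<and> is_action_on actZ Z \<and> continuous_action_on actZ Z \<and>
         equicontinuous_on actZ Z \<and>
         continuous_on UNIV p \<and> p ` UNIV = Z \<and> (\<forall>t x. p (actX t x) = actZ t (p x)))
        \<longrightarrow> (\<exists>\<psi>. continuous_on UNIV \<psi> \<and> \<psi> ` UNIV \<subseteq> Z \<and>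
                 (\<forall>t y. \<psi> (actY t y) = actZ t (\<psi> y)) \<and> (\<forall>x. p x = \<psi> (\<pi> x))))"

definition ecard :: "'a set \<Rightarrow> enat" where
  "ecard A = (if finite A then enat (card A) else \<infinity>)"

definition proximal :: "('g \<Rightarrow> 'x::metric_space \<Rightarrow> 'x) \<Rightarrow> 'x \<Rightarrow> 'x \<Rightarrow> bool" where
  "proximal act x y \<longleftrightarrow> (INF t. dist (act t x) (act t y)) = 0"

definition distal_point :: "('g \<Rightarrow> 'x::metric_space \<Rightarrow> 'x) \<Rightarrow> 'x \<Rightarrow> bool" where
  "distal_point act x \<longleftrightarrow> (\<forall>y. y \<noteq> x \<longrightarrow> \<not> proximal act x y)"

definition fiber_distal :: "('g \<Rightarrow> 'x::metric_space \<Rightarrow> 'x) \<Rightarrow> ('x \<Rightarrow> 'y) \<Rightarrow> 'y \<Rightarrow> bool" where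
  "fiber_distal act \<pi> y \<longleftrightarrow> (\<forall>x \<in> \<pi> -` {y}. distal_point act x)"

definition cr_delta :: "('g \<Rightarrow> 'x::metric_space \<Rightarrow> 'x) \<Rightarrow> ('x \<Rightarrow> 'y) \<Rightarrow> 'y \<Rightarrow> real \<Rightarrow> enat" where
  "cr_delta act \<pi> y \<delta> = Sup {enat (card S) | S. finite S \<and> S \<subseteq> \<pi> -` {y} \<and>
       (\<forall>a\<in>S. \<forall>b\<in>S. a \<noteq> b \<longrightarrow> (INF t. dist (act t a) (act t b)) \<ge> \<delta>)}"

definition coincidence_rank :: "('g \<Rightarrow> 'x::metric_space \<Rightarrow> 'x) \<Rightarrow> ('x \<Rightarrow> 'y) \<Rightarrow> 'y \<Rightarrow> enat" where
  "coincidence_rank act \<pi> y = Lim (at_right (0::real)) (cr_delta act \<pi> y)"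

definition minimal_rank :: "('x \<Rightarrow> 'y) \<Rightarrow> enat" where
  "minimal_rank \<pi> = (INF y. ecard (\<pi> -` {y}))"

end

theory Submission
  imports Defs
begin

lemma Lim_antitone_enat:
  fixes f :: "real \<Rightarrow> enat"
  assumes mono: "\<And>d d'. 0 < d \<Longrightarrow> d \<le> d' \<Longrightarrow> f d' \<le> f d"
  shows "Lim (at_right 0) f = (SUP d\<in>{0<..}. f d)"
proof (rule tendsto_Lim[OF trivial_limit_at_right_real])
  show "(f \<longlongrightarrow> (SUP d\<in>{0<..}. f d)) (at_right 0)"
    unfolding order_tendsto_iff
  proof (intro conjI allI impI)
    fix l assume "l < (SUP d\<in>{0<..}. f d)"
    then obtain d0 where d0: "d0 > 0" "l < f d0" by (auto simp: less_SUP_iff)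
    show "\<forall>\<^sub>F x in at_right 0. l < f x"
      unfolding eventually_at_right_field
      using d0 mono by (intro exI[of _ d0]) (auto intro: less_le_trans)
  next
    fix u assume u: "(SUP d\<in>{0<..}. f d) < u"
    show "\<forall>\<^sub>F x in at_right 0. f x < u"
      using eventually_at_right_less[of "0::real"]
    proof (rule eventually_mono)
      fix x :: real assume "0 < x"
      then have "f x \<le> (SUP d\<in>{0<..}. f d)" by (intro SUP_upper) auto
      then show "f x < u" using u by simp
    qed
  qed
qed

lemma multi_subseq:
  fixes u :: "'i \<Rightarrow> nat \<Rightarrow> 'x::metric_space"
  assumes cpt: "compact (UNIV::'x set)" and fin: "finite I"
  shows "\<exists>r L. strict_mono r \<and> (\<forall>i\<in>I. (u i \<circ> r) \<longlonglongrightarrow> L i)"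
  using fin
proof (induction I rule: finite_induct)
  case empty
  then show ?case by (intro exI[of _ id]) (auto simp: strict_mono_def)
next
  case (insert i I)
  then obtain r L where r: "strict_mono r" "\<forall>j\<in>I. (u j \<circ> r) \<longlonglongrightarrow> L j" by blast
  from compact_imp_seq_compact[OF cpt] obtain l r2 where
    r2: "strict_mono r2" "((u i \<circ> r) \<circ> r2) \<longlonglongrightarrow> l"
    unfolding seq_compact_def by blast
  show ?case
  proof (intro exI[of _ "r \<circ> r2"] exI[of _ "L(i := l)"] conjI ballI)
    show "strict_mono (r \<circ> r2)" by (rule strict_mono_o[OF r(1) r2(1)])
  next
    fix j assume j: "j \<in> insert i I"
    show "(u j \<circ> (r \<circ> r2)) \<longlonglongrightarrow> (L(i := l)) j"
    proof (cases "j = i")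
      case True
      then show ?thesis using r2 by (simp add: o_assoc)
    next
      case False
      then have "j \<in> I" using j by auto
      then have "((u j \<circ> r) \<circ> r2) \<longlonglongrightarrow> L j"
        using r(2) by (intro LIMSEQ_subseq_LIMSEQ[OF _ r2(1)]) auto
      then show ?thesis using False by (simp add: o_assoc)
    qed
  qed
qed


theorem mainTheorem2:
  fixes actX :: "'g::{topological_ab_group_add, t2_space} \<Rightarrow> 'x::metric_space \<Rightarrow> 'x"
    and actY :: "'g \<Rightarrow> 'y::metric_space \<Rightarrow> 'y"
    and \<pi> :: "'x \<Rightarrow> 'y"
  assumes G_lc: "locally_compact_space (euclidean :: 'g topology)"
    and X_compact: "compact (UNIV :: 'x set)"
    and act: "is_action_on actX UNIV"
    and act_cont: "continuous_action_on actX UNIV"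
    and minimal: "minimal_action actX"
    and maxfac: "max_equicontinuous_factor actX actY \<pi>"
    and mr_finite: "minimal_rank \<pi> < \<infinity>"
  shows "(\<forall>y y'. fiber_distal actX \<pi> y \<longrightarrow> coincidence_rank actX \<pi> y' = ecard (\<pi> -` {y}))
       \<and> (\<forall>y'. {y. fiber_distal actX \<pi> y} = {y. ecard (\<pi> -` {y}) = coincidence_rank actX \<pi> y'})
       \<and> (\<forall>y'. (\<exists>y. fiber_distal actX \<pi> y) \<longrightarrow> coincidence_rank actX \<pi> y' = minimal_rank \<pi>)"
proof -
  have actY_act: "is_action_on actY UNIV" and eqY: "equicontinuous_on actY UNIV"
    and piC: "continuous_on UNIV \<pi>" and surjpi: "surj \<pi>"
    and comm: "\<And>t x. \<pi> (actX t x) = actY t (\<pi> x)"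
    using maxfac unfolding max_equicontinuous_factor_def by auto
  have act0: "\<And>x. actX 0 x = x" and actadd: "\<And>s t x. actX (s + t) x = actX s (actX t x)"
    using act unfolding is_action_on_def by auto
  have actY0: "\<And>x. actY 0 x = x" and actYadd: "\<And>s t x. actY (s + t) x = actY s (actY t x)"
    using actY_act unfolding is_action_on_def by auto
  have contS: "\<And>s. continuous_on UNIV (actX s)"
  proof -
    fix s :: 'g
    have c1: "continuous_on (UNIV \<times> UNIV) (\<lambda>p. actX (fst p) (snd p))"
      using act_cont unfolding continuous_action_on_def .
    have c2: "continuous_on UNIV (\<lambda>x::'x. (s, x))"
      by (intro continuous_on_Pair continuous_on_const continuous_on_id)
    have "continuous_on UNIV (\<lambda>x. (\<lambda>p. actX (fst p) (snd p)) (s, x))"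
      by (rule continuous_on_compose2[OF c1 c2]) simp
    then show "continuous_on UNIV (actX s)" by simp
  qed
  have isC: "\<And>s x. isCont (actX s) x"
    using contS by (simp add: continuous_on_eq_continuous_at)
  have isCpi: "\<And>x. isCont \<pi> x"
    using piC by (simp add: continuous_on_eq_continuous_at)
  have infl: "\<And>a b t. (INF t. dist (actX t a) (actX t b)) \<le> dist (actX t a) (actX t b)"
    by (rule cINF_lower) (auto intro: bdd_belowI[where m=0])
  have infnn: "\<And>a b. 0 \<le> (INF t. dist (actX t a) (actX t b))"
    by (rule cINF_greatest) auto

  define sep where "sep \<delta> S \<longleftrightarrow> (\<forall>a\<in>S. \<forall>b\<in>S. a \<noteq> b \<longrightarrow> \<delta> \<le> (INF t. dist (actX t a) (actX t b)))"
    for \<delta> :: real and S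
  define C where "C y \<delta> = {enat (card S) |S. finite S \<and> S \<subseteq> \<pi> -` {y} \<and> sep \<delta> S}" for y \<delta>
  have crdC: "\<And>y \<delta>. cr_delta actX \<pi> y \<delta> = Sup (C y \<delta>)"
    unfolding cr_delta_def C_def sep_def by simp

  have transfer: "\<exists>S'. finite S' \<and> S' \<subseteq> \<pi> -` {y'} \<and> sep \<delta> S' \<and> card S' = card S"
    if d: "0 < \<delta>" and S: "finite S" "S \<subseteq> \<pi> -` {y}" "sep \<delta> S" for y y' \<delta> S
  proof -
    obtain x0 where x0: "\<pi> x0 = y" using surjpi by (metis surjD)
    have "\<pi> ` closure (range (\<lambda>t. actX t x0)) \<subseteq> closure (range (\<lambda>t. actY t y))"
    proof (rule image_closure_subset)
      show "continuous_on (closure (range (\<lambda>t. actX t x0))) \<pi>"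
        using piC by (rule continuous_on_subset) auto
      show "\<pi> ` range (\<lambda>t. actX t x0) \<subseteq> closure (range (\<lambda>t. actY t y))"
        using closure_subset comm x0 by fastforce
    qed auto
    then have "y' \<in> closure (range (\<lambda>t. actY t y))"
      using minimal surjpi unfolding minimal_action_def by (metis UNIV_I subsetD)
    then obtain z where z: "\<forall>n. z n \<in> range (\<lambda>t. actY t y)" "z \<longlonglongrightarrow> y'"
      unfolding closure_sequential by blast
    then have "\<forall>n. \<exists>t. z n = actY t y" by auto
    then obtain tt where tt: "\<And>n. z n = actY (tt n) y" by metis
    obtain r L where r: "strict_mono r" "\<forall>a\<in>S. ((\<lambda>n. actX (tt n) a) \<circ> r) \<longlonglongrightarrow> L a"
      using multi_subseq[OF X_compact S(1), of "\<lambda>a n. actX (tt n) a"] by blast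
    have conv: "(\<lambda>n. actX (tt (r n)) a) \<longlonglongrightarrow> L a" if "a \<in> S" for a
      using r(2) that by (simp add: o_def)
    have piL: "\<pi> (L a) = y'" if a: "a \<in> S" for a
    proof -
      have "(\<lambda>n. \<pi> (actX (tt (r n)) a)) \<longlonglongrightarrow> \<pi> (L a)"
        by (rule isCont_tendsto_compose[OF isCpi conv[OF a]])
      moreover have "(\<lambda>n. \<pi> (actX (tt (r n)) a)) = z \<circ> r"
        using a S(2) by (auto simp: comm tt o_def)
      moreover have "(z \<circ> r) \<longlonglongrightarrow> y'" using z(2) r(1) by (rule LIMSEQ_subseq_LIMSEQ)
      ultimately show ?thesis using LIMSEQ_unique by simp
    qed
    have sepL: "\<delta> \<le> dist (actX s (L a)) (actX s (L b))"
      if ab: "a \<in> S" "b \<in> S" "a \<noteq> b" for a b s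
    proof -
      have "(\<lambda>n. dist (actX s (actX (tt (r n)) a)) (actX s (actX (tt (r n)) b)))
              \<longlonglongrightarrow> dist (actX s (L a)) (actX s (L b))"
        by (intro tendsto_dist isCont_tendsto_compose[OF isC] conv ab)
      moreover have "\<delta> \<le> dist (actX s (actX (tt (r n)) a)) (actX s (actX (tt (r n)) b))" for n
      proof -
        have "\<delta> \<le> (INF t. dist (actX t a) (actX t b))" using S(3) ab unfolding sep_def by auto
        also have "\<dots> \<le> dist (actX (s + tt (r n)) a) (actX (s + tt (r n)) b)" by (rule infl)
        finally show ?thesis by (simp add: actadd)
      qed
      ultimately show ?thesis by (intro LIMSEQ_le_const) auto
    qed
    have injL: "inj_on L S"
    proof (rule inj_onI, rule ccontr)
      fix a b assume ab: "a \<in> S" "b \<in> S" "L a = L b" "a \<noteq> b"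
      have "\<delta> \<le> dist (actX 0 (L a)) (actX 0 (L b))" using sepL ab by blast
      then show False using ab d by simp
    qed
    show ?thesis
    proof (intro exI[of _ "L ` S"] conjI)
      show "finite (L ` S)" using S(1) by simp
      show "L ` S \<subseteq> \<pi> -` {y'}" using piL by auto
      show "card (L ` S) = card S" using injL by (rule card_image)
      show "sep \<delta> (L ` S)" unfolding sep_def
      proof (intro ballI impI)
        fix a' b' assume "a' \<in> L ` S" "b' \<in> L ` S" "a' \<noteq> b'"
        then obtain a b where "a \<in> S" "b \<in> S" "a \<noteq> b" "a' = L a" "b' = L b" by auto
        then show "\<delta> \<le> (INF t. dist (actX t a') (actX t b'))"
          using sepL by (intro cINF_greatest) auto
      qed
    qed
  qed
  have Csub: "C y \<delta> \<subseteq> C y' \<delta>" if "0 < \<delta>" for y y' \<delta>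
  proof
    fix c assume "c \<in> C y \<delta>"
    then obtain S where S: "c = enat (card S)" "finite S" "S \<subseteq> \<pi> -` {y}" "sep \<delta> S"
      unfolding C_def by auto
    from transfer[OF that S(2-4), of y'] obtain S' where
      "finite S'" "S' \<subseteq> \<pi> -` {y'}" "sep \<delta> S'" "card S' = card S" by blast
    then show "c \<in> C y' \<delta>" unfolding C_def using S(1) by (metis (mono_tags, lifting) mem_Collect_eq)
  qed
  have crd_eq: "cr_delta actX \<pi> y \<delta> = cr_delta actX \<pi> y' \<delta>" if "0 < \<delta>" for y y' \<delta>
    using Csub[OF that, of y y'] Csub[OF that, of y' y] by (simp add: crdC)
  have crd_mono: "cr_delta actX \<pi> y d' \<le> cr_delta actX \<pi> y d" if "0 < d" "d \<le> d'" for y d d'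
  proof -
    have "C y d' \<subseteq> C y d" unfolding C_def sep_def using that by force
    then show ?thesis by (simp add: crdC Sup_subset_mono)
  qed
  define crs where "crs y = (SUP d\<in>{0<..}. cr_delta actX \<pi> y d)" for y
  have cr_crs: "coincidence_rank actX \<pi> y = crs y" for y
    unfolding coincidence_rank_def crs_def by (rule Lim_antitone_enat) (rule crd_mono)
  have crs_eq: "crs y = crs y'" for y y'
    unfolding crs_def by (intro SUP_cong refl crd_eq) auto
  have crs_le0: "crs y \<le> ecard (\<pi> -` {y})" for y
    unfolding crs_def
  proof (rule SUP_least)
    fix d :: real
    show "cr_delta actX \<pi> y d \<le> ecard (\<pi> -` {y})"
      unfolding crdC
    proof (rule Sup_least)
      fix c assume "c \<in> C y d"
      then obtain S where S: "c = enat (card S)" "finite S" "S \<subseteq> \<pi> -` {y}" unfolding C_def by auto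
      show "c \<le> ecard (\<pi> -` {y})"
        using S card_mono[of "\<pi> -` {y}" S] by (auto simp: ecard_def)
    qed
  qed
  have crs_le: "crs y \<le> ecard (\<pi> -` {y'})" for y y'
    using crs_le0[of y'] crs_eq[of y y'] by simp
  have crs_mr: "crs y \<le> minimal_rank \<pi>" for y
    unfolding minimal_rank_def by (rule INF_greatest) (rule crs_le)
  have distal_lower: "enat (card S) \<le> crs y"
    if fd: "fiber_distal actX \<pi> y" and S: "finite S" "S \<subseteq> \<pi> -` {y}" for y S
  proof -
    define P where "P = {(a, b). a \<in> S \<and> b \<in> S \<and> a \<noteq> b}"
    define h where "h = (\<lambda>(a, b). INF t. dist (actX t a) (actX t b))"
    have "P \<subseteq> S \<times> S" unfolding P_def by auto
    then have finP: "finite P" using S(1) by (meson finite_SigmaI finite_subset)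
    have hpos: "h p > 0" if pP: "p \<in> P" for p
    proof -
      obtain a b where p: "p = (a, b)" "a \<in> S" "b \<in> S" "a \<noteq> b" using pP unfolding P_def by auto
      have "distal_point actX a" using fd S(2) p unfolding fiber_distal_def by auto
      then have "\<not> proximal actX a b" using p unfolding distal_point_def by auto
      then have "(INF t. dist (actX t a) (actX t b)) \<noteq> 0" unfolding proximal_def by simp
      then show ?thesis using infnn[of a b] p unfolding h_def by simp
    qed
    define \<delta> where "\<delta> = (if P = {} then 1 else Min (h ` P))"
    have dpos: "0 < \<delta>" unfolding \<delta>_def using finP hpos by auto
    have "sep \<delta> S" unfolding sep_def
    proof (intro ballI impI)
      fix a b assume ab: "a \<in> S" "b \<in> S" "a \<noteq> b"
      then have "(a, b) \<in> P" unfolding P_def by auto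
      then have "\<delta> \<le> h (a, b)" unfolding \<delta>_def using finP by auto
      then show "\<delta> \<le> (INF t. dist (actX t a) (actX t b))" unfolding h_def by simp
    qed
    then have "enat (card S) \<in> C y \<delta>" unfolding C_def using S by auto
    then have "enat (card S) \<le> cr_delta actX \<pi> y \<delta>" unfolding crdC by (rule Sup_upper)
    also have "\<dots> \<le> crs y" unfolding crs_def using dpos by (intro SUP_upper) auto
    finally show ?thesis .
  qed
  have distal_eq: "crs y = ecard (\<pi> -` {y})" if fd: "fiber_distal actX \<pi> y" for y
  proof (rule antisym[OF crs_le0])
    show "ecard (\<pi> -` {y}) \<le> crs y"
    proof (cases "finite (\<pi> -` {y})")
      case True
      then show ?thesis using distal_lower[OF fd True] by (simp add: ecard_def)
    next
      case False
      have all: "enat n \<le> crs y" for n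
      proof -
        obtain B where "finite B" "card B = n" "B \<subseteq> \<pi> -` {y}"
          using infinite_arbitrarily_large[OF False] by blast
        then show ?thesis using distal_lower[OF fd] by blast
      qed
      have "crs y = \<infinity>"
      proof (cases "crs y")
        case (enat m)
        then show ?thesis using all[of "Suc m"] by simp
      qed simp
      then show ?thesis by simp
    qed
  qed
  have prox_fiber: "\<pi> a = \<pi> b" if "proximal actX a b" for a b
  proof (rule ccontr)
    assume ne: "\<pi> a \<noteq> \<pi> b"
    define e where "e = dist (\<pi> a) (\<pi> b)"
    have e: "e > 0" using ne unfolding e_def by simp
    obtain d where d: "d > 0" "\<forall>t. \<forall>x\<in>UNIV. \<forall>y\<in>UNIV. dist x y < d \<longrightarrow> dist (actY t x) (actY t y) < e"
      using eqY e unfolding equicontinuous_on_def by blast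
    have "uniformly_continuous_on UNIV \<pi>" using compact_uniformly_continuous[OF piC X_compact] .
    then obtain d' where d': "d' > 0" "\<forall>x\<in>UNIV. \<forall>x'\<in>UNIV. dist x' x < d' \<longrightarrow> dist (\<pi> x') (\<pi> x) < d"
      using d(1) unfolding uniformly_continuous_on_def by blast
    have "(INF t. dist (actX t a) (actX t b)) < d'" using that d' unfolding proximal_def by simp
    then obtain t where "dist (actX t a) (actX t b) < d'"
      by (subst (asm) cINF_less_iff) (auto intro: bdd_belowI[where m=0])
    then have "dist (\<pi> (actX t a)) (\<pi> (actX t b)) < d" using d' by auto
    then have "dist (actY t (\<pi> a)) (actY t (\<pi> b)) < d" by (simp add: comm)
    then have "dist (actY (-t) (actY t (\<pi> a))) (actY (-t) (actY t (\<pi> b))) < e" using d by blast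
    then have "dist (\<pi> a) (\<pi> b) < e" by (simp flip: actYadd add: actY0)
    then show False unfolding e_def by simp
  qed
  have part2: "fiber_distal actX \<pi> y" if eq: "ecard (\<pi> -` {y}) = crs y" for y
  proof -
    have "crs y < \<infinity>" using crs_mr[of y] mr_finite by (rule le_less_trans)
    then have fin: "finite (\<pi> -` {y})" using eq by (auto simp: ecard_def split: if_splits)
    define n where "n = card (\<pi> -` {y})"
    have crsn: "crs y = enat n" using eq fin unfolding n_def by (simp add: ecard_def)
    show ?thesis unfolding fiber_distal_def distal_point_def
    proof (intro ballI allI impI notI)
      fix x z assume x: "x \<in> \<pi> -` {y}" and zx: "z \<noteq> x" and prox: "proximal actX x z"
      have z: "z \<in> \<pi> -` {y}" using prox_fiber[OF prox] x by simp
      have npos: "n > 0" unfolding n_def using fin x by (auto simp: card_gt_0_iff)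
      have "enat (n - 1) < crs y" using crsn npos by simp
      then obtain \<delta> where dl: "\<delta> > 0" "enat (n - 1) < cr_delta actX \<pi> y \<delta>"
        unfolding crs_def by (auto simp: less_SUP_iff)
      then obtain c where "c \<in> C y \<delta>" "enat (n - 1) < c" unfolding crdC by (auto simp: less_Sup_iff)
      then obtain S where S: "finite S" "S \<subseteq> \<pi> -` {y}" "sep \<delta> S" "n - 1 < card S"
        unfolding C_def by auto
      have "card S \<le> n" unfolding n_def using card_mono[OF fin S(2)] .
      then have "card S = card (\<pi> -` {y})" using S(4) npos unfolding n_def by simp
      then have "S = \<pi> -` {y}" using card_subset_eq[OF fin S(2)] by simp
      then have "\<delta> \<le> (INF t. dist (actX t x) (actX t z))" using S(3) x z zx unfolding sep_def by auto
      then show False using prox dl(1) unfolding proximal_def by simp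
    qed
  qed
  have crc: "coincidence_rank actX \<pi> y' = crs y" for y y'
    using crs_eq cr_crs by simp
  show ?thesis
  proof (intro conjI allI impI)
    fix y y' assume "fiber_distal actX \<pi> y"
    then show "coincidence_rank actX \<pi> y' = ecard (\<pi> -` {y})"
      using distal_eq crc[of y' y] by simp
  next
    fix y'
    show "{y. fiber_distal actX \<pi> y} = {y. ecard (\<pi> -` {y}) = coincidence_rank actX \<pi> y'}"
    proof (intro set_eqI iffI; simp)
      fix y assume "fiber_distal actX \<pi> y"
      then show "ecard (\<pi> -` {y}) = coincidence_rank actX \<pi> y'" using distal_eq crc[of y' y] by simp
    next
      fix y assume "ecard (\<pi> -` {y}) = coincidence_rank actX \<pi> y'"
      then show "fiber_distal actX \<pi> y" using part2 crc[of y' y] by simp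
    qed
  next
    fix y' assume "\<exists>y. fiber_distal actX \<pi> y"
    then obtain y where fd: "fiber_distal actX \<pi> y" by blast
    have "minimal_rank \<pi> \<le> ecard (\<pi> -` {y})" unfolding minimal_rank_def by (rule INF_lower) simp
    then have "minimal_rank \<pi> \<le> coincidence_rank actX \<pi> y'" using distal_eq[OF fd] crc[of y' y] by simp
    then show "coincidence_rank actX \<pi> y' = minimal_rank \<pi>"
      using crs_mr[of y'] cr_crs by (simp add: antisym)
  qed
qed

end
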